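(* Let $G$ be a finite group with $G=\langle x,y\rangle$, where $x$ has order $4$, $y$ has order at least $5$, and $xy$ has order at least $3$. Then $\mathrm{Cay}(G,\{x,y\})$ is an oriented regular representation (ORR) of $G$, unless $y$ has order $12$, $x=y^9$, and $G\cong\mathbb{Z}_{12}$.
   Context: For a group $G$ and $S\subseteq G$, the Cayley digraph $\mathrm{Cay}(G,S)$ has vertex set $G$, and $(u,v)$ is an arc whenever $vu^{-1}\in S$. Its automorphism group consists of the permutations of $G$ preserving the arc set, and always contains the right regular representation of $G$. $\mathrm{Cay}(G,S)$ is an oriented regular representation (ORR) if its automorphism group equals the right regular representation of $G$ and it is a proper digraph, i.e. $(u,v)$ being an arc implies $(v,u)$ is not an arc (equivalently $S\cap S^{-1}=\emptyset$). *)

theory Defs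
  imports "HOL-Algebra.Algebra"
begin

definition cay_arc :: "('a, 'b) monoid_scheme \<Rightarrow> 'a set \<Rightarrow> 'a \<Rightarrow> 'a \<Rightarrow> bool" where
  "cay_arc G S u v \<longleftrightarrow> u \<in> carrier G \<and> v \<in> carrier G \<and> v \<otimes>\<^bsub>G\<^esub> inv\<^bsub>G\<^esub> u \<in> S"

definition cay_aut :: "('a, 'b) monoid_scheme \<Rightarrow> 'a set \<Rightarrow> ('a \<Rightarrow> 'a) \<Rightarrow> bool" where
  "cay_aut G S \<sigma> \<longleftrightarrow> bij_betw \<sigma> (carrier G) (carrier G) \<and>
     (\<forall>u\<in>carrier G. \<forall>v\<in>carrier G. cay_arc G S u v \<longleftrightarrow> cay_arc G S (\<sigma> u) (\<sigma> v))"

definition is_ORR :: "('a, 'b) monoid_scheme \<Rightarrow> 'a set \<Rightarrow> bool" where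
  "is_ORR G S \<longleftrightarrow>
     (\<forall>u v. cay_arc G S u v \<longrightarrow> \<not> cay_arc G S v u) \<and>
     (\<forall>\<sigma>. cay_aut G S \<sigma> \<longrightarrow> (\<exists>g\<in>carrier G. \<forall>u\<in>carrier G. \<sigma> u = u \<otimes>\<^bsub>G\<^esub> g))"

end

theory Submission
  imports Defs
begin

lemma (in group) pow4_expand:
  "a \<in> carrier G \<Longrightarrow> a [^] (4::nat) = a \<otimes> a \<otimes> a \<otimes> a"
  by (simp add: numeral_eq_Suc)

lemma (in group) pow2_expand:
  "a \<in> carrier G \<Longrightarrow> a [^] (2::nat) = a \<otimes> a"
  by (simp add: numeral_eq_Suc)

lemma (in group) rot4:
  assumes "a \<in> carrier G" "b \<in> carrier G" "c \<in> carrier G" "d \<in> carrier G"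
    and "a \<otimes> b \<otimes> c \<otimes> d = \<one>"
  shows "b \<otimes> c \<otimes> d \<otimes> a = \<one>"
proof -
  have "a \<otimes> (b \<otimes> c \<otimes> d) = \<one>" using assms by (simp add: m_assoc)
  then have "(b \<otimes> c \<otimes> d) \<otimes> a = \<one>" using assms inv_comm by blast
  then show ?thesis .
qed

lemma (in group) word_lemma:
  assumes xc: "x \<in> carrier G" and yc: "y \<in> carrier G"
    and ox: "ord x = 4" and oy: "ord y \<ge> 5" and oxy: "ord (x \<otimes> y) \<ge> 3"
    and nexc: "x \<otimes> y \<otimes> y \<otimes> y \<noteq> \<one>"
    and a: "a1 \<in> {x,y}" "a2 \<in> {x,y}" "a3 \<in> {x,y}" "a4 \<in> {x,y}"
    and w: "a4 \<otimes> a3 \<otimes> a2 \<otimes> a1 = \<one>"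
  shows "a1 = x"
proof -
  have x4: "x \<otimes> x \<otimes> x \<otimes> x = \<one>"
    using pow_ord_eq_1[OF xc] ox pow4_expand[OF xc] by simp
  have A: "x \<otimes> x \<otimes> x \<otimes> y \<noteq> \<one>"
  proof
    assume h: "x \<otimes> x \<otimes> x \<otimes> y = \<one>"
    have "(x \<otimes> x \<otimes> x) \<otimes> y = (x \<otimes> x \<otimes> x) \<otimes> x" using h x4 by simp
    then have "y = x" using xc yc l_cancel by (meson m_closed)
    then show False using ox oy by simp
  qed
  have E: "y \<otimes> y \<otimes> y \<otimes> y \<noteq> \<one>"
  proof
    assume h: "y \<otimes> y \<otimes> y \<otimes> y = \<one>"
    then have "y [^] (4::nat) = \<one>" using pow4_expand[OF yc] by simp
    then have "ord y dvd 4" using pow_eq_id[OF yc] by simp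
    then have "ord y \<le> 4" by (simp add: dvd_imp_le)
    then show False using oy by simp
  qed
  have B: "x \<otimes> x \<otimes> y \<otimes> y \<noteq> \<one>"
  proof
    assume h: "x \<otimes> x \<otimes> y \<otimes> y = \<one>"
    have "(x \<otimes> x) \<otimes> (y \<otimes> y) = (x \<otimes> x) \<otimes> (x \<otimes> x)"
      using h x4 xc yc by (simp add: m_assoc)
    then have yy: "y \<otimes> y = x \<otimes> x" using xc yc l_cancel by (meson m_closed)
    have "y \<otimes> y \<otimes> y \<otimes> y = (y \<otimes> y) \<otimes> (y \<otimes> y)" using yc by (simp add: m_assoc)
    also have "\<dots> = \<one>" using yy x4 xc by (simp add: m_assoc)
    finally show False using E by simp
  qed
  have C: "x \<otimes> y \<otimes> x \<otimes> y \<noteq> \<one>"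
  proof
    assume h: "x \<otimes> y \<otimes> x \<otimes> y = \<one>"
    then have "(x \<otimes> y) [^] (2::nat) = \<one>" using pow2_expand xc yc by (simp add: m_assoc)
    then have "ord (x \<otimes> y) dvd 2" using pow_eq_id xc yc by simp
    then have "ord (x \<otimes> y) \<le> 2" by (simp add: dvd_imp_le)
    then show False using oxy by simp
  qed
  show ?thesis
  proof (rule ccontr)
    assume "a1 \<noteq> x"
    then have a1: "a1 = y" using a by auto
    have ac: "a2 \<in> carrier G" "a3 \<in> carrier G" "a4 \<in> carrier G"
      using a xc yc by auto
    have r1: "a3 \<otimes> a2 \<otimes> y \<otimes> a4 = \<one>"
      by (rule rot4) (use ac yc w a1 in auto)
    have r2: "a2 \<otimes> y \<otimes> a4 \<otimes> a3 = \<one>"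
      by (rule rot4) (use ac yc r1 in auto)
    have "a2 = x \<or> a2 = y" "a3 = x \<or> a3 = y" "a4 = x \<or> a4 = y" using a by auto
    then show False
      using w r1 r2 A B C E nexc unfolding a1 by (elim disjE; simp)
  qed
qed


lemma (in group) exc_lemma:
  assumes xc: "x \<in> carrier G" and yc: "y \<in> carrier G"
    and gen: "generate G {x, y} = carrier G"
    and ox: "ord x = 4" and oy: "ord y \<ge> 5"
    and w: "x \<otimes> y \<otimes> y \<otimes> y = \<one>"
  shows "ord y = 12 \<and> x = y [^] (9::nat) \<and> G \<cong> integer_mod_group 12"
proof -
  define y3 where "y3 = y [^] (3::nat)"
  have y3c: "y3 \<in> carrier G" using yc y3_def by simp
  have "y3 = y \<otimes> y \<otimes> y" using yc unfolding y3_def by (simp add: numeral_eq_Suc)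
  then have "x \<otimes> y3 = \<one>" using w xc yc by (simp add: m_assoc)
  then have xinv: "x = inv y3" using inv_equality[of x y3] xc y3c by simp
  have pw: "x [^] (n::nat) = inv (y [^] (3 * n))" for n
    using xinv nat_pow_inv[OF y3c, of n] nat_pow_pow[OF yc] y3_def by simp
  have "x [^] (4::nat) = \<one>" using pow_ord_eq_1[OF xc] ox by simp
  then have "inv (y [^] (12::nat)) = \<one>" using pw[of 4] by simp
  then have y12: "y [^] (12::nat) = \<one>"
    by (metis inv_inv inv_one nat_pow_closed yc)
  then have "ord y dvd 12" using pow_eq_id[OF yc] by simp
  moreover have "ord y \<noteq> 6"
  proof
    assume "ord y = 6"
    then have "y [^] (6::nat) = \<one>" using pow_ord_eq_1[OF yc] by simp
    then have "x [^] (2::nat) = \<one>" using pw[of 2] by simp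
    then have "ord x dvd 2" using pow_eq_id[OF xc] by simp
    then show False using ox by simp
  qed
  ultimately have oy12: "ord y = 12"
  proof -
    assume d: "ord y dvd 12" "ord y \<noteq> 6"
    have "ord y \<le> 12" using d by (simp add: dvd_imp_le)
    obtain d where dd: "d = ord y" by simp
    have "5 \<le> d" "d \<le> 12" "d dvd 12" "d \<noteq> 6" using d oy \<open>ord y \<le> 12\<close> dd by auto
    then have "d \<in> {5,6,7,8,9,10,11,12}" by auto
    then have "d = 12" using \<open>d dvd 12\<close> \<open>d \<noteq> 6\<close> by auto
    then show ?thesis using dd by simp
  qed
  have "y [^] (9::nat) \<otimes> y3 = \<one>"
    using y12 nat_pow_mult[OF yc, of 9 3] y3_def by simp
  then have x9: "x = y [^] (9::nat)"
    using inv_equality[of "y [^] (9::nat)" y3] xinv y3c yc by simp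
  define h where "h = (\<lambda>k::int. y [^] k)"
  have hmod: "h k = h (k mod 12)" for k
    unfolding h_def using int_pow_eq[OF yc, of k "k mod 12"] oy12
    by (simp add: mod_eq_dvd_iff[symmetric])
  have hhom: "h \<in> hom (integer_mod_group 12) G"
  proof (rule homI)
    fix a assume "a \<in> carrier (integer_mod_group 12)"
    show "h a \<in> carrier G" unfolding h_def using yc by simp
  next
    fix a b assume "a \<in> carrier (integer_mod_group 12)" "b \<in> carrier (integer_mod_group 12)"
    have "h ((a + b) mod 12) = h (a + b)" using hmod[of "a+b"] by simp
    also have "\<dots> = h a \<otimes> h b" unfolding h_def by (rule int_pow_mult[OF yc])
    finally show "h (a \<otimes>\<^bsub>integer_mod_group 12\<^esub> b) = h a \<otimes> h b" by simp
  qed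
  have hinj: "inj_on h (carrier (integer_mod_group 12))"
  proof (rule inj_onI)
    fix a b assume a: "a \<in> carrier (integer_mod_group 12)" and b: "b \<in> carrier (integer_mod_group 12)"
      and e: "h a = h b"
    then have "int (ord y) dvd (b - a)" unfolding h_def using int_pow_eq[OF yc] by simp
    then have "(12::int) dvd (b - a)" using oy12 by simp
    moreover have "0 \<le> a" "a < 12" "0 \<le> b" "b < 12" using a b by (auto simp: carrier_integer_mod_group)
    ultimately show "a = b" by (metis dvd_imp_le_int eq_iff_diff_eq_0 mod_pos_pos_trivial mod_eq_dvd_iff)
  qed
  have sub: "subgroup (generate G {y}) G" using generate_is_subgroup yc by simp
  have "x = y [^] (int 9)" using x9 by (metis int_pow_int)
  then have "x \<in> generate G {y}" using generate_pow[OF yc] by blast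
  moreover have "y \<in> generate G {y}" by (simp add: generate.incl)
  ultimately have "carrier G \<subseteq> generate G {y}"
    using generate_subgroup_incl[OF _ sub, of "{x,y}"] gen by auto
  then have "carrier G \<subseteq> h ` carrier (integer_mod_group 12)"
  proof -
    assume c: "carrier G \<subseteq> generate G {y}"
    show ?thesis
    proof
      fix z assume "z \<in> carrier G"
      then obtain k where k: "z = y [^] (k::int)" using c generate_pow[OF yc] by auto
      have "z = h (k mod 12)" using hmod[of k] k h_def by simp
      moreover have "k mod 12 \<in> carrier (integer_mod_group 12)"
        by (simp add: carrier_integer_mod_group)
      ultimately show "z \<in> h ` carrier (integer_mod_group 12)" by blast
    qed
  qed
  moreover have "h ` carrier (integer_mod_group 12) \<subseteq> carrier G"
    using hhom by (auto simp: hom_def)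
  ultimately have "h ` carrier (integer_mod_group 12) = carrier G" by blast
  then have "h \<in> iso (integer_mod_group 12) G"
    using hhom hinj by (simp add: iso_iff)
  then have "integer_mod_group 12 \<cong> G" by (rule is_isoI)
  then have "G \<cong> integer_mod_group 12"
    by (rule group.iso_sym[OF group_integer_mod_group])
  then show ?thesis using oy12 x9 by simp
qed


lemma (in group) no_2cycle:
  assumes xc: "x \<in> carrier G" and yc: "y \<in> carrier G"
    and ox: "ord x = 4" and oy: "ord y \<ge> 5" and oxy: "ord (x \<otimes> y) \<ge> 3"
    and a: "a \<in> {x,y}" "b \<in> {x,y}" and w: "b \<otimes> a = \<one>"
  shows False
proof -
  have sq: False if "c \<in> carrier G" "c \<otimes> c = \<one>" "ord c \<ge> 3" for c
  proof -
    have "c [^] (2::nat) = \<one>" using that pow2_expand by simp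
    then have "ord c dvd 2" using pow_eq_id that by simp
    then have "ord c \<le> 2" by (simp add: dvd_imp_le)
    then show False using that by simp
  qed
  have "\<one> [^] (1::nat) = \<one>" by simp
  then have "ord \<one> dvd 1" using pow_eq_id[of \<one> 1] by simp
  then have o1: "ord \<one> = 1" by simp
  have xy: "x \<otimes> y \<noteq> \<one>" using oxy o1 by auto
  have yx: "y \<otimes> x \<noteq> \<one>" using xy inv_comm xc yc by blast
  show False
    using a w sq[OF xc] sq[OF yc] ox oy xy yx by auto
qed

theorem lemma2p5:
  fixes G (structure) and x y :: 'a
  assumes "group G" and "finite (carrier G)"
    and "x \<in> carrier G" and "y \<in> carrier G"
    and "generate G {x, y} = carrier G"
    and "group.ord G x = 4" and "group.ord G y \<ge> 5"
    and "group.ord G (x \<otimes> y) \<ge> 3"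
    and "\<not> (group.ord G y = 12 \<and> x = y [^] (9::nat) \<and> G \<cong> integer_mod_group 12)"
  shows "is_ORR G {x, y}"
proof -
  interpret group G by fact
  have xc: "x \<in> carrier G" and yc: "y \<in> carrier G" by fact+
  have ox: "ord x = 4" and oy: "ord y \<ge> 5" and oxy: "ord (x \<otimes> y) \<ge> 3" by fact+
  have gen: "generate G {x, y} = carrier G" by fact
  have nexc: "x \<otimes> y \<otimes> y \<otimes> y \<noteq> \<one>"
    using exc_lemma[OF xc yc gen ox oy] assms(9) by blast
  have xney: "x \<noteq> y" using ox oy by auto
  have x4: "x \<otimes> x \<otimes> x \<otimes> x = \<one>"
    using pow_ord_eq_1[OF xc] ox pow4_expand[OF xc] by simp
  have eqv: "v \<otimes> inv u = a \<longleftrightarrow> v = a \<otimes> u" if "a \<in> carrier G" "u \<in> carrier G" "v \<in> carrier G" for a u v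
    using inv_solve_right'[OF that(1) that(3) that(2)] .
  have arc: "cay_arc G {x,y} u v \<longleftrightarrow> u \<in> carrier G \<and> v \<in> carrier G \<and> (\<exists>a\<in>{x,y}. v = a \<otimes> u)" for u v
    unfolding cay_arc_def using eqv xc yc by auto
  have proper: "\<forall>u v. cay_arc G {x,y} u v \<longrightarrow> \<not> cay_arc G {x,y} v u"
  proof (intro allI impI notI)
    fix u v assume h1: "cay_arc G {x,y} u v" and h2: "cay_arc G {x,y} v u"
    obtain a where a: "a \<in> {x,y}" "v = a \<otimes> u" and uc: "u \<in> carrier G" using h1 arc by blast
    obtain b where b: "b \<in> {x,y}" "u = b \<otimes> v" using h2 arc by blast
    have ac: "a \<in> carrier G" "b \<in> carrier G" using a b xc yc by auto
    have "(b \<otimes> a) \<otimes> u = \<one> \<otimes> u" using a b ac uc by (simp add: m_assoc)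
    then have "b \<otimes> a = \<one>" using r_cancel ac uc by (meson m_closed one_closed)
    then show False using no_2cycle[OF xc yc ox oy oxy a(1) b(1)] by simp
  qed
  have auts: "\<exists>g\<in>carrier G. \<forall>u\<in>carrier G. \<sigma> u = u \<otimes> g" if aut: "cay_aut G {x,y} \<sigma>" for \<sigma>
  proof -
    have bij: "bij_betw \<sigma> (carrier G) (carrier G)" using aut cay_aut_def by blast
    have sc: "\<sigma> u \<in> carrier G" if "u \<in> carrier G" for u using bij that bij_betwE by blast
    have sinj: "inj_on \<sigma> (carrier G)" using bij bij_betw_def by blast
    have pres: "\<exists>a\<in>{x,y}. \<sigma> (c \<otimes> u) = a \<otimes> \<sigma> u" if "c \<in> {x,y}" "u \<in> carrier G" for c u
    proof -
      have cc: "c \<in> carrier G" using that xc yc by auto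
      have "cay_arc G {x,y} u (c \<otimes> u)" using arc that cc by auto
      then have "cay_arc G {x,y} (\<sigma> u) (\<sigma> (c \<otimes> u))" using aut that cc unfolding cay_aut_def by auto
      then show ?thesis using arc by auto
    qed
    have stepx: "\<sigma> (x \<otimes> u) = x \<otimes> \<sigma> u" if uc: "u \<in> carrier G" for u
    proof -
      define u1 where "u1 = x \<otimes> u"
      define u2 where "u2 = x \<otimes> u1"
      define u3 where "u3 = x \<otimes> u2"
      have uc': "u1 \<in> carrier G" "u2 \<in> carrier G" "u3 \<in> carrier G"
        using uc xc u1_def u2_def u3_def by auto
      have u4: "u = x \<otimes> u3" using x4 uc xc unfolding u1_def u2_def u3_def
        by (metis l_one m_assoc m_closed)
      obtain a1 where a1: "a1 \<in> {x,y}" "\<sigma> u1 = a1 \<otimes> \<sigma> u" using pres[OF _ uc, of x] u1_def by auto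
      obtain a2 where a2: "a2 \<in> {x,y}" "\<sigma> u2 = a2 \<otimes> \<sigma> u1" using pres[OF _ uc'(1), of x] u2_def by auto
      obtain a3 where a3: "a3 \<in> {x,y}" "\<sigma> u3 = a3 \<otimes> \<sigma> u2" using pres[OF _ uc'(2), of x] u3_def by auto
      obtain a4 where a4: "a4 \<in> {x,y}" "\<sigma> u = a4 \<otimes> \<sigma> u3" using pres[OF _ uc'(3), of x] u4 by auto
      have ac: "a1 \<in> carrier G" "a2 \<in> carrier G" "a3 \<in> carrier G" "a4 \<in> carrier G"
        using a1 a2 a3 a4 xc yc by auto
      have "(a4 \<otimes> a3 \<otimes> a2 \<otimes> a1) \<otimes> \<sigma> u = \<one> \<otimes> \<sigma> u"
        using a1 a2 a3 a4 ac sc[OF uc] by (simp add: m_assoc)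
      then have "a4 \<otimes> a3 \<otimes> a2 \<otimes> a1 = \<one>" using r_cancel ac sc[OF uc] by (meson m_closed one_closed)
      then have "a1 = x" using word_lemma[OF xc yc ox oy oxy nexc a1(1) a2(1) a3(1) a4(1)] by simp
      then show ?thesis using a1 u1_def by simp
    qed
    have stepy: "\<sigma> (y \<otimes> u) = y \<otimes> \<sigma> u" if uc: "u \<in> carrier G" for u
    proof -
      obtain b where b: "b \<in> {x,y}" "\<sigma> (y \<otimes> u) = b \<otimes> \<sigma> u" using pres[OF _ uc, of y] by auto
      show ?thesis
      proof (cases "b = y")
        case True then show ?thesis using b by simp
      next
        case False
        then have "\<sigma> (y \<otimes> u) = \<sigma> (x \<otimes> u)" using b stepx[OF uc] by auto
        then have "y \<otimes> u = x \<otimes> u" using sinj uc xc yc by (meson inj_onD m_closed)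
        then have "y = x" using r_cancel uc xc yc by blast
        then show ?thesis using xney by simp
      qed
    qed
    have P: "h \<in> carrier G \<and> (\<forall>u\<in>carrier G. \<sigma> (h \<otimes> u) = h \<otimes> \<sigma> u)" if "h \<in> generate G {x,y}" for h
      using that
    proof (induct rule: generate.induct)
      case one
      then show ?case using sc by simp
    next
      case (incl h)
      then show ?case using stepx stepy xc yc by auto
    next
      case (inv h)
      have hc: "h \<in> carrier G" using inv xc yc by auto
      have hs: "\<sigma> (h \<otimes> w) = h \<otimes> \<sigma> w" if "w \<in> carrier G" for w
        using inv stepx stepy that by auto
      have "\<sigma> (inv h \<otimes> u) = inv h \<otimes> \<sigma> u" if uc: "u \<in> carrier G" for u
      proof -
        have "\<sigma> u = \<sigma> (h \<otimes> (inv h \<otimes> u))" using hc uc by (simp add: m_assoc[symmetric])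
        also have "\<dots> = h \<otimes> \<sigma> (inv h \<otimes> u)" using hs hc uc by simp
        finally have "\<sigma> u = h \<otimes> \<sigma> (inv h \<otimes> u)" .
        then show ?thesis using inv_solve_left[of "\<sigma> (inv h \<otimes> u)" h "\<sigma> u"] sc hc uc by simp
      qed
      then show ?case using hc by simp
    next
      case (eng h1 h2)
      then show ?case by (simp add: m_assoc sc)
    qed
    have "\<sigma> u = u \<otimes> \<sigma> \<one>" if "u \<in> carrier G" for u
      using P[of u] gen that by (metis one_closed r_one)
    then show ?thesis using sc[OF one_closed] by blast
  qed
  show ?thesis unfolding is_ORR_def using proper auts by blast
qed

end
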